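(* Let $A$ be a domain which satisfies the ascending chain condition on completely prime ideals (every ascending chain of completely prime ideals of $A$ stabilizes). Then $A$ is Hopfian.
   Context: A two-sided ideal $P$ of $A$ is \emph{completely prime} if $A/P$ is a domain. A ring $A$ is \emph{Hopfian} if $A$ is not isomorphic (as a ring) to $A/J$ for any nonzero two-sided ideal $J \triangleleft A$. *)

theory Defs
  imports "HOL-Algebra.Algebra"
begin

definition nc_domain :: "('a, 'b) ring_scheme \<Rightarrow> bool" where
  "nc_domain R \<longleftrightarrow> ring R \<and> \<one>\<^bsub>R\<^esub> \<noteq> \<zero>\<^bsub>R\<^esub> \<and>
     (\<forall>a\<in>carrier R. \<forall>b\<in>carrier R. a \<otimes>\<^bsub>R\<^esub> b = \<zero>\<^bsub>R\<^esub> \<longrightarrow> a = \<zero>\<^bsub>R\<^esub> \<or> b = \<zero>\<^bsub>R\<^esub>)"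

definition completely_prime :: "('a, 'b) ring_scheme \<Rightarrow> 'a set \<Rightarrow> bool" where
  "completely_prime R P \<longleftrightarrow> ideal P R \<and> nc_domain (R Quot P)"

definition acc_completely_prime :: "('a, 'b) ring_scheme \<Rightarrow> bool" where
  "acc_completely_prime R \<longleftrightarrow>
     (\<forall>f :: nat \<Rightarrow> 'a set. (\<forall>n. completely_prime R (f n)) \<and> (\<forall>n. f n \<subseteq> f (Suc n))
        \<longrightarrow> (\<exists>N. \<forall>n\<ge>N. f n = f N))"

definition hopfian :: "('a, 'b) ring_scheme \<Rightarrow> bool" where
  "hopfian R \<longleftrightarrow> \<not> (\<exists>J. ideal J R \<and> J \<noteq> {\<zero>\<^bsub>R\<^esub>} \<and> R \<simeq> (R Quot J))"

end

theory Submission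
  imports Defs
begin

lemma cp_kernel:
  fixes A :: "('a, 'b) ring_scheme"
  assumes D: "nc_domain A" and g: "g \<in> ring_hom A A"
  shows "completely_prime A (a_kernel A A g)"
proof -
  have R: "ring A" using D unfolding nc_domain_def by auto
  let ?K = "a_kernel A A g"
  have I: "ideal ?K A" by (rule ring_hom_ring.kernel_is_ideal[OF ring_hom_ringI2[OF R R g]])
  have Kmem: "x \<in> ?K \<longleftrightarrow> x \<in> carrier A \<and> g x = \<zero>\<^bsub>A\<^esub>" for x
    by (simp add: a_kernel_def')
  have g0: "g \<zero>\<^bsub>A\<^esub> = \<zero>\<^bsub>A\<^esub>" using ring_hom_zero[OF g R R] .
  have memK: "a \<in> carrier A \<Longrightarrow> ?K +>\<^bsub>A\<^esub> a = ?K \<Longrightarrow> a \<in> ?K" for a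
    using ideal.rcos_const_imp_mem[OF I] by blast
  have rep: "\<exists>a\<in>carrier A. U = a_r_coset A ?K a" if "U \<in> carrier (FactRing A ?K)" for U
    using that
    by (auto simp: FactRing_def A_RCOSETS_def')
  have "nc_domain (A Quot ?K)"
    unfolding nc_domain_def
  proof (intro conjI ballI impI)
    show "ring (A Quot ?K)" by (rule ideal.quotient_is_ring[OF I])
    show "\<one>\<^bsub>A Quot ?K\<^esub> \<noteq> \<zero>\<^bsub>A Quot ?K\<^esub>"
    proof
      assume "\<one>\<^bsub>A Quot ?K\<^esub> = \<zero>\<^bsub>A Quot ?K\<^esub>"
      hence "?K +>\<^bsub>A\<^esub> \<one>\<^bsub>A\<^esub> = ?K" by (simp add: FactRing_def)
      hence "\<one>\<^bsub>A\<^esub> \<in> ?K" by (rule memK[OF monoid.one_closed[OF ring.is_monoid[OF R]]])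
      hence "g \<one>\<^bsub>A\<^esub> = \<zero>\<^bsub>A\<^esub>" using Kmem by blast
      thus False using D ring_hom_one[OF g] unfolding nc_domain_def by simp
    qed
    fix U V assume U: "U \<in> carrier (A Quot ?K)" and V: "V \<in> carrier (A Quot ?K)"
      and XY: "U \<otimes>\<^bsub>A Quot ?K\<^esub> V = \<zero>\<^bsub>A Quot ?K\<^esub>"
    obtain a where a: "a \<in> carrier A" "U = ?K +>\<^bsub>A\<^esub> a" using rep[OF U] by blast
    obtain b where b: "b \<in> carrier A" "V = ?K +>\<^bsub>A\<^esub> b" using rep[OF V] by blast
    have "?K +>\<^bsub>A\<^esub> (a \<otimes>\<^bsub>A\<^esub> b) = ?K"
      using XY a b ideal.rcoset_mult_add[OF I a(1) b(1)] by (simp add: FactRing_def)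
    hence "a \<otimes>\<^bsub>A\<^esub> b \<in> ?K" by (rule memK[OF monoid.m_closed[OF ring.is_monoid[OF R] a(1) b(1)]])
    hence "g a \<otimes>\<^bsub>A\<^esub> g b = \<zero>\<^bsub>A\<^esub>" using Kmem ring_hom_mult[OF g a(1) b(1)] by simp
    hence "g a = \<zero>\<^bsub>A\<^esub> \<or> g b = \<zero>\<^bsub>A\<^esub>" using D ring_hom_closed[OF g a(1)] ring_hom_closed[OF g b(1)] unfolding nc_domain_def by blast
    hence "a \<in> ?K \<or> b \<in> ?K" using Kmem a b by blast
    thus "U = \<zero>\<^bsub>A Quot ?K\<^esub> \<or> V = \<zero>\<^bsub>A Quot ?K\<^esub>"
      using a b ring.a_rcos_zero[OF R I, of a] ring.a_rcos_zero[OF R I, of b] by (auto simp: FactRing_def)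
  qed
  thus ?thesis using I unfolding completely_prime_def by simp
qed

theorem mainTheorem3:
  fixes A :: "('a, 'b) ring_scheme"
  assumes "nc_domain A"
    and "acc_completely_prime A"
  shows "hopfian A"
proof -
  have R: "ring A" using assms(1) unfolding nc_domain_def by auto
  show ?thesis unfolding hopfian_def
  proof
    assume "\<exists>J. ideal J A \<and> J \<noteq> {\<zero>\<^bsub>A\<^esub>} \<and> A \<simeq> A Quot J"
    then obtain J where J: "ideal J A" and Jnz: "J \<noteq> {\<zero>\<^bsub>A\<^esub>}" and iso: "A \<simeq> A Quot J" by blast
    have RQ: "ring (A Quot J)" by (rule ideal.quotient_is_ring[OF J])
    have "A Quot J \<simeq> A" using ring_iso_sym[OF R iso] .
    then obtain h where h: "h \<in> ring_iso (A Quot J) A" unfolding is_ring_iso_def by blast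
    have hh: "h \<in> ring_hom (A Quot J) A" and hb: "bij_betw h (carrier (A Quot J)) (carrier A)"
      using h unfolding ring_iso_def by auto
    define \<psi> where "\<psi> = h \<circ> (+>\<^bsub>A\<^esub>) J"
    have \<psi>h: "\<psi> \<in> ring_hom A A" unfolding \<psi>_def by (rule ring_hom_trans[OF ideal.rcos_ring_hom[OF J] hh])
    have img1: "(+>\<^bsub>A\<^esub>) J ` carrier A = carrier (A Quot J)"
      by (auto simp: FactRing_def A_RCOSETS_def')
    have \<psi>s: "\<psi> ` carrier A = carrier A"
      unfolding \<psi>_def image_comp[symmetric] img1 using bij_betw_imp_surj_on[OF hb] .
    have h0: "h J = \<zero>\<^bsub>A\<^esub>" using ring_hom_zero[OF hh RQ R] by (simp add: FactRing_def)
    have Jc: "J \<in> carrier (A Quot J)" using RQ ring.ring_simprules(2)[OF RQ] by (simp add: FactRing_def)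
    have \<psi>k: "\<psi> x = \<zero>\<^bsub>A\<^esub> \<longleftrightarrow> x \<in> J" if x: "x \<in> carrier A" for x
    proof
      assume "\<psi> x = \<zero>\<^bsub>A\<^esub>"
      hence "h (J +>\<^bsub>A\<^esub> x) = h J" using h0 by (simp add: \<psi>_def)
      moreover have "J +>\<^bsub>A\<^esub> x \<in> carrier (A Quot J)" using img1 x by blast
      ultimately have "J +>\<^bsub>A\<^esub> x = J" using Jc bij_betw_imp_inj_on[OF hb] by (auto dest: inj_onD)
      thus "x \<in> J" using ideal.rcos_const_imp_mem[OF J] x by blast
    next
      assume "x \<in> J"
      hence "J +>\<^bsub>A\<^esub> x = J" by (rule ring.a_rcos_zero[OF R J])
      thus "\<psi> x = \<zero>\<^bsub>A\<^esub>" using h0 by (simp add: \<psi>_def)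
    qed
    have \<psi>0: "\<psi> \<zero>\<^bsub>A\<^esub> = \<zero>\<^bsub>A\<^esub>" using ring_hom_zero[OF \<psi>h R R] .
    define g where "g n = \<psi> ^^ n" for n
    have gh: "g n \<in> ring_hom A A" for n
    proof (induction n)
      case 0 thus ?case using id_ring_hom[of A] by (simp add: g_def id_def)
    next
      case (Suc n)
      have "\<psi> \<circ> g n \<in> ring_hom A A" by (rule ring_hom_trans[OF Suc \<psi>h])
      thus ?case by (simp add: g_def comp_def)
    qed
    have gs: "g n ` carrier A = carrier A" for n
    proof (induction n)
      case 0 thus ?case by (simp add: g_def)
    next
      case (Suc n)
      have "g (Suc n) ` carrier A = \<psi> ` (g n ` carrier A)" by (simp add: g_def image_comp)
      thus ?case using Suc \<psi>s by simp
    qed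
    have gS: "g (Suc n) x = \<psi> (g n x)" for n x by (simp add: g_def)
    define f where "f n = a_kernel A A (g n)" for n
    have fm: "x \<in> f n \<longleftrightarrow> x \<in> carrier A \<and> g n x = \<zero>\<^bsub>A\<^esub>" for n x
      by (simp add: f_def a_kernel_def')
    have cp: "\<forall>n. completely_prime A (f n)" unfolding f_def using cp_kernel[OF assms(1) gh] by blast
    have ch: "\<forall>n. f n \<subseteq> f (Suc n)" using fm gS \<psi>0 by auto
    have H: "\<forall>f :: nat \<Rightarrow> 'a set. (\<forall>n. completely_prime A (f n)) \<and> (\<forall>n. f n \<subseteq> f (Suc n))
        \<longrightarrow> (\<exists>N. \<forall>n\<ge>N. f n = f N)" using assms(2) unfolding acc_completely_prime_def .
    obtain N where N: "\<forall>n\<ge>N. f n = f N"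
      using H[rule_format, OF conjI[OF cp ch]] by blast
    have fN: "f (Suc N) = f N" using spec[OF N, of "Suc N"] by simp
    have "\<zero>\<^bsub>A\<^esub> \<in> J" by (rule additive_subgroup.zero_closed[OF ideal.axioms(1)[OF J]])
    then obtain x where xJ: "x \<in> J" and xnz: "x \<noteq> \<zero>\<^bsub>A\<^esub>" using Jnz by blast
    have xc: "x \<in> carrier A" using xJ ideal.Icarr[OF J] by blast
    then obtain y where y: "y \<in> carrier A" "x = g N y" using gs[of N] by blast
    have "g (Suc N) y = \<zero>\<^bsub>A\<^esub>" using gS y \<psi>k[OF xc] xJ by simp
    hence "y \<in> f N" using fN fm y(1) by blast
    hence "x = \<zero>\<^bsub>A\<^esub>" using fm y by simp
    thus False using xnz by simp
  qed
qed

end
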